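(* Let $k\geq 2$ be an integer and let $A=[\bm{a}_1,\dots,\bm{a}_n]\in\mathbb{R}^{m\times n}$ have columns with $\|\bm{a}_i\|_2=1$ for all $i$. Suppose the mutual coherence $\mu=\max_{1\leq i<j\leq n}|\langle \bm{a}_i,\bm{a}_j\rangle|$ satisfies $\mu<\frac{1}{2k-1}$. Let $\lambda>0$, let $\bm{x}\in\mathbb{R}^n$ be arbitrary, let $\bm{z}\in\mathbb{R}^m$ with $\|\bm{z}\|_2\leq\lambda$, and set $\bm{b}=A\bm{x}+\bm{z}$. Let $\bm{x}^{\sharp}$ be an optimal solution of $$\min_{\bm{y}\in\mathbb{R}^n}\ \|\bm{y}\|_1+\frac{1}{2\lambda}\|\bm{b}-A\bm{y}\|_2^2 .$$ Define $$\alpha_1=\frac{\sqrt{1+(k-1)\mu}}{1-(k-1)\mu},\qquad \alpha_2=\frac{\sqrt{k}\,\mu}{1-(k-1)\mu},$$ $$f_k(t)=kt^2+3\sqrt{k}\,t+3,\qquad g_k(t)=2kt^2+4\sqrt{k}\,t+1,$$ and $$\widehat{C}_1=\frac{2}{\sqrt{k}\alpha_1+1},\quad \widehat{C}_2=2(\sqrt{k}\alpha_1+1),\quad \widehat{C}_3=\frac{2\sqrt{k}\alpha_1 f_k(\alpha_2)+2g_k(\alpha_2)}{\sqrt{k}(1-\sqrt{k}\alpha_2)(\sqrt{k}\alpha_1+1)},$$ $$\widehat{C}_4=\frac{\big(\sqrt{k}\alpha_1(5+2\sqrt{k}\alpha_2)+g_k(\alpha_2)\big)(\sqrt{k}\alpha_1+1)}{\sqrt{k}(1-\sqrt{k}\alpha_2)}.$$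 Then $$\|A(\bm{x}^{\sharp}-\bm{x})\|_2\leq \widehat{C}_1\|\bm{x}-\bm{x}_{[k]}\|_1+\widehat{C}_2\lambda,\qquad \|\bm{x}^{\sharp}-\bm{x}\|_2\leq \widehat{C}_3\|\bm{x}-\bm{x}_{[k]}\|_1+\widehat{C}_4\lambda.$$
   Context: For $\bm{x}\in\mathbb{R}^n$, $\bm{x}_{[k]}$ denotes a best $k$-term approximation of $\bm{x}$, i.e. $\bm{x}_{[k]}\in\arg\min_{\|\bm{y}\|_0\leq k}\|\bm{y}-\bm{x}\|_2$, where $\|\bm{y}\|_0$ is the number of nonzero entries of $\bm{y}$. *)

theory Defs
  imports "HOL-Analysis.Analysis"
begin

definition l1norm :: "real ^ 'n \<Rightarrow> real" where
  "l1norm x = (\<Sum>i\<in>UNIV. \<bar>x $ i\<bar>)"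

definition l0 :: "real ^ 'n \<Rightarrow> nat" where
  "l0 x = card {i. x $ i \<noteq> 0}"

definition best_k_term :: "nat \<Rightarrow> real ^ 'n \<Rightarrow> real ^ 'n \<Rightarrow> bool" where
  "best_k_term k x y \<longleftrightarrow> l0 y \<le> k \<and> (\<forall>y'. l0 y' \<le> k \<longrightarrow> norm (y - x) \<le> norm (y' - x))"

text \<open>Mutual coherence: maximum of absolute inner products of distinct columns (0 if there is only one column).\<close>
definition mutual_coherence :: "real ^ 'n ^ 'm \<Rightarrow> real" where
  "mutual_coherence A =
     Max ({\<bar>column i A \<bullet> column j A\<bar> | i j. i \<noteq> j} \<union> {0})"

definition alpha1 :: "nat \<Rightarrow> real \<Rightarrow> real" where
  "alpha1 k \<mu> = sqrt (1 + (real k - 1) * \<mu>) / (1 - (real k - 1) * \<mu>)"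

definition alpha2 :: "nat \<Rightarrow> real \<Rightarrow> real" where
  "alpha2 k \<mu> = sqrt (real k) * \<mu> / (1 - (real k - 1) * \<mu>)"

definition fk :: "nat \<Rightarrow> real \<Rightarrow> real" where
  "fk k t = real k * t\<^sup>2 + 3 * sqrt (real k) * t + 3"

definition gk :: "nat \<Rightarrow> real \<Rightarrow> real" where
  "gk k t = 2 * real k * t\<^sup>2 + 4 * sqrt (real k) * t + 1"

definition C1 :: "nat \<Rightarrow> real \<Rightarrow> real" where
  "C1 k \<mu> = 2 / (sqrt (real k) * alpha1 k \<mu> + 1)"

definition C2 :: "nat \<Rightarrow> real \<Rightarrow> real" where
  "C2 k \<mu> = 2 * (sqrt (real k) * alpha1 k \<mu> + 1)"

definition C3 :: "nat \<Rightarrow> real \<Rightarrow> real" where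
  "C3 k \<mu> = (2 * sqrt (real k) * alpha1 k \<mu> * fk k (alpha2 k \<mu>) + 2 * gk k (alpha2 k \<mu>))
     / (sqrt (real k) * (1 - sqrt (real k) * alpha2 k \<mu>) * (sqrt (real k) * alpha1 k \<mu> + 1))"

definition C4 :: "nat \<Rightarrow> real \<Rightarrow> real" where
  "C4 k \<mu> = ((sqrt (real k) * alpha1 k \<mu> * (5 + 2 * sqrt (real k) * alpha2 k \<mu>) + gk k (alpha2 k \<mu>))
       * (sqrt (real k) * alpha1 k \<mu> + 1))
     / (sqrt (real k) * (1 - sqrt (real k) * alpha2 k \<mu>))"

end

theory Submission imports Defs begin

lemma Av_inner:
  fixes A :: "real ^ 'n ^ 'm"
  shows "(A *v v) \<bullet> (A *v w) = (\<Sum>i\<in>UNIV. \<Sum>j\<in>UNIV. v$i * w$j * (column i A \<bullet> column j A))"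
  unfolding matrix_mult_sum scalar_mult_eq_scaleR inner_sum_left inner_sum_right
  by (subst sum.swap) (simp add: sum_distrib_left mult_ac)

lemma coh_bound:
  fixes A :: "real ^ 'n ^ 'm"
  assumes "i \<noteq> j"
  shows "\<bar>column i A \<bullet> column j A\<bar> \<le> mutual_coherence A"
proof -
  have fin: "finite ({\<bar>column i A \<bullet> column j A\<bar> | i j. i \<noteq> j} \<union> {0::real})"
  proof -
    have "{\<bar>column i A \<bullet> column j A\<bar> | i j. i \<noteq> j} = (\<lambda>p. \<bar>column (fst p) A \<bullet> column (snd p) A\<bar>) ` {p. fst p \<noteq> snd p}"
      by auto (metis (mono_tags) fst_conv snd_conv mem_Collect_eq rev_image_eqI)
    then show ?thesis by simp
  qed
  show ?thesis unfolding mutual_coherence_def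
    by (rule Max_ge[OF fin]) (use assms in blast)
qed

lemma coh_nonneg:
  fixes A :: "real ^ 'n ^ 'm"
  shows "0 \<le> mutual_coherence A"
proof -
  have fin: "finite ({\<bar>column i A \<bullet> column j A\<bar> | i j. i \<noteq> j} \<union> {0::real})"
  proof -
    have "{\<bar>column i A \<bullet> column j A\<bar> | i j. i \<noteq> j} = (\<lambda>p. \<bar>column (fst p) A \<bullet> column (snd p) A\<bar>) ` {p. fst p \<noteq> snd p}"
      by auto (metis (mono_tags) fst_conv snd_conv mem_Collect_eq rev_image_eqI)
    then show ?thesis by simp
  qed
  show ?thesis unfolding mutual_coherence_def
    by (rule Max_ge[OF fin]) blast
qed

lemma cross_bound:
  fixes A :: "real ^ 'n ^ 'm"
  assumes v: "\<And>i. i \<notin> T \<Longrightarrow> v$i = 0" and w: "\<And>i. i \<in> T \<Longrightarrow> w$i = 0"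
  shows "\<bar>(A *v v) \<bullet> (A *v w)\<bar> \<le> mutual_coherence A * (\<Sum>i\<in>UNIV. \<bar>v$i\<bar>) * (\<Sum>i\<in>UNIV. \<bar>w$i\<bar>)"
proof -
  let ?mu = "mutual_coherence A"
  have trm: "\<bar>v$i * w$j * (column i A \<bullet> column j A)\<bar> \<le> ?mu * \<bar>v$i\<bar> * \<bar>w$j\<bar>" for i j
  proof (cases "i = j")
    case True
    then have "v$i * w$j = 0" using v w by (cases "i \<in> T") auto
    then show ?thesis using coh_nonneg[of A] by (auto simp: abs_mult)
  next
    case False
    have "\<bar>v$i * w$j * (column i A \<bullet> column j A)\<bar> = \<bar>v$i\<bar> * \<bar>w$j\<bar> * \<bar>column i A \<bullet> column j A\<bar>"
      by (simp add: abs_mult)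
    also have "\<dots> \<le> \<bar>v$i\<bar> * \<bar>w$j\<bar> * ?mu"
      by (rule mult_left_mono[OF coh_bound[OF False]]) simp
    finally show ?thesis by (simp add: mult_ac)
  qed
  have "\<bar>(A *v v) \<bullet> (A *v w)\<bar> \<le> (\<Sum>i\<in>UNIV. \<Sum>j\<in>UNIV. \<bar>v$i * w$j * (column i A \<bullet> column j A)\<bar>)"
    unfolding Av_inner by (rule order_trans[OF sum_abs]) (intro sum_mono sum_abs)
  also have "\<dots> \<le> (\<Sum>i\<in>UNIV. \<Sum>j\<in>UNIV. ?mu * \<bar>v$i\<bar> * \<bar>w$j\<bar>)"
    by (intro sum_mono trm)
  also have "\<dots> = ?mu * (\<Sum>i\<in>UNIV. \<bar>v$i\<bar>) * (\<Sum>i\<in>UNIV. \<bar>w$i\<bar>)"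
    by (simp add: sum_distrib_left sum_distrib_right mult_ac)
  finally show ?thesis .
qed

lemma sum_UNIV_supp:
  fixes f :: "'n::finite \<Rightarrow> real"
  assumes "\<And>i. i \<notin> T \<Longrightarrow> f i = 0"
  shows "sum f UNIV = sum f T"
  by (rule sum.mono_neutral_right) (use assms in auto)

lemma l1_l2_card:
  fixes v :: "real ^ 'n"
  assumes v: "\<And>i. i \<notin> T \<Longrightarrow> v$i = 0"
  shows "(\<Sum>i\<in>UNIV. \<bar>v$i\<bar>)\<^sup>2 \<le> real (card T) * (\<Sum>i\<in>UNIV. (v$i)\<^sup>2)"
proof -
  have "(\<Sum>i\<in>UNIV. \<bar>v$i\<bar>) = (\<Sum>i\<in>T. \<bar>v$i\<bar>)" by (rule sum_UNIV_supp) (simp add: v)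
  moreover have "(\<Sum>i\<in>UNIV. (v$i)\<^sup>2) = (\<Sum>i\<in>T. (v$i)\<^sup>2)" by (rule sum_UNIV_supp) (simp add: v)
  moreover have "(\<Sum>i\<in>T. \<bar>v$i\<bar>)\<^sup>2 \<le> (\<Sum>i\<in>T. \<bar>v$i\<bar>\<^sup>2) * card T"
    by (rule sum_squared_le_sum_of_squares)
  ultimately show ?thesis by (simp add: mult.commute)
qed

lemma gram_bound:
  fixes A :: "real ^ 'n ^ 'm"
  assumes cols: "\<forall>i. norm (column i A) = 1"
    and v: "\<And>i. i \<notin> T \<Longrightarrow> v$i = 0" and card: "card T \<le> k"
  shows "\<bar>(A *v v) \<bullet> (A *v v) - (\<Sum>i\<in>UNIV. (v$i)\<^sup>2)\<bar> \<le> mutual_coherence A * (real k - 1) * (\<Sum>i\<in>UNIV. (v$i)\<^sup>2)"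
proof -
  let ?mu = "mutual_coherence A"
  let ?G = "\<lambda>i j. column i A \<bullet> column j A"
  let ?E = "\<Sum>i\<in>UNIV. \<Sum>j\<in>UNIV. (if i = j then 0 else v$i * v$j * ?G i j)"
  have Gii: "?G i i = 1" for i using cols by (metis norm_eq_sqrt_inner real_sqrt_eq_1_iff)
  have pt: "v$i * v$j * ?G i j = (if i = j then (v$i)\<^sup>2 else 0) + (if i = j then 0 else v$i * v$j * ?G i j)" for i j
    using Gii by (simp add: power2_eq_square)
  have eq: "(A *v v) \<bullet> (A *v v) = (\<Sum>i\<in>UNIV. (v$i)\<^sup>2) + ?E"
    unfolding Av_inner by (subst pt) (simp add: sum.distrib)
  have "\<bar>?E\<bar> \<le> (\<Sum>i\<in>UNIV. \<Sum>j\<in>UNIV. \<bar>if i = j then 0 else v$i * v$j * ?G i j\<bar>)"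
    by (rule order_trans[OF sum_abs]) (intro sum_mono sum_abs)
  also have "\<dots> \<le> (\<Sum>i\<in>UNIV. \<Sum>j\<in>UNIV. ?mu * \<bar>v$i\<bar> * \<bar>v$j\<bar> - (if i = j then ?mu * (v$i)\<^sup>2 else 0))"
  proof (intro sum_mono)
    fix i j
    show "\<bar>if i = j then 0 else v$i * v$j * ?G i j\<bar> \<le> ?mu * \<bar>v$i\<bar> * \<bar>v$j\<bar> - (if i = j then ?mu * (v$i)\<^sup>2 else 0)"
    proof (cases "i = j")
      case True then show ?thesis by (simp add: power2_eq_square abs_mult)
    next
      case False
      have "\<bar>v$i * v$j * ?G i j\<bar> = \<bar>v$i\<bar> * \<bar>v$j\<bar> * \<bar>?G i j\<bar>" by (simp add: abs_mult)
      also have "\<dots> \<le> \<bar>v$i\<bar> * \<bar>v$j\<bar> * ?mu"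
        by (rule mult_left_mono[OF coh_bound[OF False]]) simp
      finally show ?thesis using False by (simp add: mult_ac)
    qed
  qed
  also have "\<dots> = ?mu * ((\<Sum>i\<in>UNIV. \<bar>v$i\<bar>)\<^sup>2 - (\<Sum>i\<in>UNIV. (v$i)\<^sup>2))"
    by (simp add: sum_subtractf sum_distrib_left sum_distrib_right power2_eq_square right_diff_distrib mult_ac)
  also have "\<dots> \<le> ?mu * (real (card T) * (\<Sum>i\<in>UNIV. (v$i)\<^sup>2) - (\<Sum>i\<in>UNIV. (v$i)\<^sup>2))"
    by (intro mult_left_mono diff_right_mono l1_l2_card coh_nonneg) (simp add: v)
  also have "\<dots> \<le> ?mu * (real k - 1) * (\<Sum>i\<in>UNIV. (v$i)\<^sup>2)"
  proof -
    have nn: "0 \<le> (\<Sum>i\<in>UNIV. (v$i)\<^sup>2)" by (simp add: sum_nonneg)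
    have "real (card T) * (\<Sum>i\<in>UNIV. (v$i)\<^sup>2) - (\<Sum>i\<in>UNIV. (v$i)\<^sup>2) \<le> (real k - 1) * (\<Sum>i\<in>UNIV. (v$i)\<^sup>2)"
      using mult_right_mono[OF _ nn, of "real (card T) - 1" "real k - 1"] card by (simp add: left_diff_distrib)
    then show ?thesis using coh_nonneg[of A] by (simp add: mult.assoc mult_left_mono)
  qed
  finally show ?thesis using eq by simp
qed

lemma e1: fixes s p q b D :: real
  assumes "s \<noteq> 0" "b \<noteq> 0" "D \<noteq> 0" and bd: "b = s * p+1" "D = 1 - s * q"
  shows "2 * p / b + (q + 1/(2 * s)) * 2 / D = (3 * p * s + 2 * q * s + 1) / (s * D * b)"
proof -
  have "2 * p / b + (q + 1/(2 * s)) * 2 / D = (2 * p * s * D + (2 * q * s+1) * b) / (s * D * b)"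
    using assms(1-3) by (simp add: field_simps)
  also have "2 * p * s * D + (2 * q * s+1) * b = 3 * p * s + 2 * q * s + 1" unfolding bd by (simp add: algebra_simps)
  finally show ?thesis .
qed
lemma e2: fixes s p q b D :: real
  assumes "s \<noteq> 0" "b \<noteq> 0" "D \<noteq> 0" and bd: "b = s * p+1" "D = 1 - s * q"
  shows "2 * p * b + (q + 1/(2 * s)) * b^2 / (2 * D) = b * ((9 * p * s - 6 * p * s\<^sup>2 * q + 2 * q * s + 1) / 4) / (s * D)"
proof -
  have "2 * p * b + (q + 1/(2 * s)) * b^2 / (2 * D) = b * ((8 * p * s * D + (2 * q * s+1) * b) / 4) / (s * D)"
    using assms(1-3) by (simp add: field_simps power2_eq_square)
  also have "8 * p * s * D + (2 * q * s+1) * b = 9 * p * s - 6 * p * s\<^sup>2 * q + 2 * q * s + 1" unfolding bd by (simp add: algebra_simps power2_eq_square)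
  finally show ?thesis .
qed

lemma final_alg:
  fixes s p q lam sig a H L ST nh :: real
  assumes s: "s > 0" and p: "p \<ge> 0" and q: "q \<ge> 0" and D: "1 - s * q > 0"
    and lam: "lam > 0" and sig: "sig \<ge> 0" and a: "a \<ge> 0" and H: "H \<ge> 0" and L: "L \<ge> 0"
    and cone: "H \<le> ST + 2 * sig + a - a\<^sup>2 / (2 * lam)"
    and STL: "ST \<le> s * L" and Lb: "L \<le> p * a + q * H" and nh: "nh \<le> L + H / (2 * s)"
  shows "a \<le> 2 / (s * p + 1) * sig + 2 * (s * p + 1) * lam"
    and "nh \<le> (2 * s * p * (s\<^sup>2 * q\<^sup>2 + 3 * s * q + 3) + 2 * (2 * s\<^sup>2 * q\<^sup>2 + 4 * s * q + 1))
               / (s * (1 - s * q) * (s * p + 1)) * sig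
            + ((s * p * (5 + 2 * s * q) + (2 * s\<^sup>2 * q\<^sup>2 + 4 * s * q + 1)) * (s * p + 1))
               / (s * (1 - s * q)) * lam"
proof -
  define b where "b = s * p + 1"
  define D where "D = 1 - s * q"
  have b: "b \<ge> 1" using s p by (simp add: b_def)
  have Dp: "D > 0" using D by (simp add: D_def)
  have "s * L \<le> s * (p * a + q * H)" using Lb s by (simp add: mult_left_mono)
  then have a1: "D * H \<le> b * a + 2 * sig - a\<^sup>2 / (2 * lam)"
    using cone STL by (simp add: D_def b_def algebra_simps)
  have a2: "a\<^sup>2 / (2 * lam) \<le> b * a + 2 * sig"
    using a1 Dp H by (smt (verit) mult_nonneg_nonneg)
  then have a2': "a\<^sup>2 \<le> 2 * lam * b * a + 4 * lam * sig"
    using lam by (simp add: field_simps)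
  define c where "c = 2 * b * lam + 2 * sig / b"
  have a3: "a \<le> c"
  proof (rule ccontr)
    assume "\<not> a \<le> c"
    then have ac: "a > c" by simp
    have c0: "c - 2 * lam * b \<ge> 0" using sig b by (simp add: c_def)
    have "c * (c - 2 * lam * b) = 4 * lam * sig + 4 * sig\<^sup>2 / b\<^sup>2"
      using b by (simp add: c_def field_simps power2_eq_square)
    also have "\<dots> \<ge> 4 * lam * sig" by simp
    finally have "c * (c - 2 * lam * b) \<ge> 4 * lam * sig" .
    moreover have "a * (a - 2 * lam * b) > c * (c - 2 * lam * b)"
    proof -
      have "c * (c - 2 * lam * b) \<le> c * (a - 2 * lam * b)"
        proof (rule mult_left_mono)
        show "c - 2 * lam * b \<le> a - 2 * lam * b" using ac by linarith
        show "0 \<le> c" using c0 b lam by (smt (verit) mult_nonneg_nonneg)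
      qed
      also have "\<dots> < a * (a - 2 * lam * b)"
        using ac c0 by (intro mult_strict_right_mono) auto
      finally show ?thesis .
    qed
    ultimately show False using a2' by (simp add: power2_eq_square algebra_simps)
  qed
  then show "a \<le> 2 / (s * p + 1) * sig + 2 * (s * p + 1) * lam"
    by (simp add: c_def b_def mult_ac)
  have a4: "b * a - a\<^sup>2 / (2 * lam) \<le> b\<^sup>2 * lam / 2"
  proof -
    have "0 \<le> (a - b * lam)\<^sup>2" by simp
    then have "2 * lam * (b * a) - a\<^sup>2 \<le> b\<^sup>2 * lam * lam" by (simp add: power2_eq_square algebra_simps)
    then show ?thesis using lam by (simp add: field_simps)
  qed
  have a5: "H \<le> (b\<^sup>2 * lam / 2 + 2 * sig) / D"
    using a1 a4 Dp by (simp add: field_simps)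
  have a6: "nh \<le> p * a + (q + 1 / (2 * s)) * H"
    using nh Lb by (simp add: algebra_simps)
  also have "\<dots> \<le> p * c + (q + 1 / (2 * s)) * ((b\<^sup>2 * lam / 2 + 2 * sig) / D)"
    using a3 a5 p q s by (intro add_mono mult_left_mono) auto
  also have "\<dots> = (2 * p / b + (q + 1/(2 * s)) * 2 / D) * sig + (2 * p * b + (q + 1/(2 * s)) * b^2 / (2 * D)) * lam"
    unfolding c_def by (simp add: algebra_simps add_divide_distrib)
  also have "\<dots> = ((3 * p * s + 2 * q * s + 1) / (s * D * b)) * sig
       + (b * ((9 * p * s - 6 * p * s\<^sup>2 * q + 2 * q * s + 1) / 4) / (s * D)) * lam"
  proof -
    have nz: "s \<noteq> 0" "b \<noteq> 0" "D \<noteq> 0" using s Dp b by auto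
    show ?thesis by (simp only: e1[OF nz b_def D_def] e2[OF nz b_def D_def])
  qed
  also have "\<dots> \<le> (2 * s * p * (s\<^sup>2 * q\<^sup>2 + 3 * s * q + 3) + 2 * (2 * s\<^sup>2 * q\<^sup>2 + 4 * s * q + 1))
               / (s * (1 - s * q) * (s * p + 1)) * sig
            + ((s * p * (5 + 2 * s * q) + (2 * s\<^sup>2 * q\<^sup>2 + 4 * s * q + 1)) * (s * p + 1))
               / (s * (1 - s * q)) * lam"
  proof (intro add_mono mult_right_mono)
    have "3 * p * s + 2 * q * s + 1 \<le> 2 * s * p * (s\<^sup>2 * q\<^sup>2 + 3 * s * q + 3) + 2 * (2 * s\<^sup>2 * q\<^sup>2 + 4 * s * q + 1)"
      using s p q by (simp add: algebra_simps power2_eq_square; smt (verit) mult_nonneg_nonneg)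
    then show "(3 * p * s + 2 * q * s + 1) / (s * D * b) \<le> (2 * s * p * (s\<^sup>2 * q\<^sup>2 + 3 * s * q + 3) + 2 * (2 * s\<^sup>2 * q\<^sup>2 + 4 * s * q + 1))
               / (s * (1 - s * q) * (s * p + 1))"
      using s Dp b by (simp add: D_def b_def divide_right_mono)
    have "(9 * p * s - 6 * p * s\<^sup>2 * q + 2 * q * s + 1) / 4 \<le> s * p * (5 + 2 * s * q) + (2 * s\<^sup>2 * q\<^sup>2 + 4 * s * q + 1)"
      using s p q by (simp add: algebra_simps power2_eq_square; smt (verit) mult_nonneg_nonneg)
    then have "b * ((9 * p * s - 6 * p * s\<^sup>2 * q + 2 * q * s + 1) / 4) \<le> (s * p * (5 + 2 * s * q) + (2 * s\<^sup>2 * q\<^sup>2 + 4 * s * q + 1)) * (s * p + 1)"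
      using b by (simp add: b_def mult.commute mult_left_mono)
    then show "b * ((9 * p * s - 6 * p * s\<^sup>2 * q + 2 * q * s + 1) / 4) / (s * D) \<le> ((s * p * (5 + 2 * s * q) + (2 * s\<^sup>2 * q\<^sup>2 + 4 * s * q + 1)) * (s * p + 1))
               / (s * (1 - s * q))"
      unfolding D_def by (rule divide_right_mono) (use s Dp in \<open>auto simp: D_def\<close>)
  qed (use sig lam in auto)
  finally show "nh \<le> (2 * s * p * (s\<^sup>2 * q\<^sup>2 + 3 * s * q + 3) + 2 * (2 * s\<^sup>2 * q\<^sup>2 + 4 * s * q + 1))
               / (s * (1 - s * q) * (s * p + 1)) * sig
            + ((s * p * (5 + 2 * s * q) + (2 * s\<^sup>2 * q\<^sup>2 + 4 * s * q + 1)) * (s * p + 1))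
               / (s * (1 - s * q)) * lam" .
qed


lemma norm_sq_vec:
  fixes v :: "real ^ 'n"
  shows "(norm v)\<^sup>2 = (\<Sum>i\<in>UNIV. (v$i)\<^sup>2)"
  unfolding power2_norm_eq_inner inner_vec_def by (simp add: power2_eq_square)

theorem corollary1:
  fixes A :: "real ^ 'n ^ 'm" and x xs xk :: "real ^ 'n" and z b :: "real ^ 'm"
    and k :: nat and lam :: real
  assumes "k \<ge> 2"
    and "\<forall>i. norm (column i A) = 1"
    and "mutual_coherence A < 1 / (2 * real k - 1)"
    and "lam > 0"
    and "norm z \<le> lam"
    and "b = A *v x + z"
    and "\<forall>y. l1norm xs + 1 / (2 * lam) * (norm (b - A *v xs))\<^sup>2
              \<le> l1norm y + 1 / (2 * lam) * (norm (b - A *v y))\<^sup>2"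
    and "best_k_term k x xk"
  shows "norm (A *v (xs - x)) \<le> C1 k (mutual_coherence A) * l1norm (x - xk) + C2 k (mutual_coherence A) * lam
       \<and> norm (xs - x) \<le> C3 k (mutual_coherence A) * l1norm (x - xk) + C4 k (mutual_coherence A) * lam"
proof -
  define mu where "mu = mutual_coherence A"
  define s where "s = sqrt (real k)"
  define den where "den = 1 - (real k - 1) * mu"
  define p where "p = alpha1 k mu"
  define q where "q = alpha2 k mu"
  define h where "h = xs - x"
  define a where "a = norm (A *v h)"
  define sig where "sig = l1norm (x - xk)"
  have k2: "real k \<ge> 2" using assms(1) by simp
  have mu0: "0 \<le> mu" unfolding mu_def by (rule coh_nonneg)
  have mu1: "mu * (2 * real k - 1) < 1"
    using assms(3) k2 by (simp add: mu_def pos_less_divide_eq)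
  have denp: "den > 0"
  proof -
    have "(real k - 1) * mu \<le> (2 * real k - 1) * mu" using mu0 k2 by (intro mult_right_mono) auto
    then show ?thesis using mu1 by (simp add: den_def mult.commute)
  qed
  have s0: "s > 0" using k2 by (simp add: s_def)
  have rk: "real k = s\<^sup>2" by (simp add: s_def)
  have p0: "p \<ge> 0" using denp mu0 k2 by (simp add: p_def alpha1_def den_def[symmetric])
  have q0: "q \<ge> 0" using denp mu0 s0 by (simp add: q_def alpha2_def den_def[symmetric] s_def[symmetric])
  have qdef: "q = s * mu / den" by (simp add: q_def alpha2_def den_def s_def)
  have pdef: "p = sqrt (1 + (real k - 1) * mu) / den" by (simp add: p_def alpha1_def den_def)
  have Dpos: "1 - s * q > 0"
  proof -
    have "s * q = real k * mu / den" using rk by (simp add: qdef power2_eq_square)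
    also have "\<dots> < 1" using denp mu1 by (simp add: den_def field_simps)
    finally show ?thesis by simp
  qed
  have lam: "lam > 0" using assms(4) .
  have opt: "l1norm xs + 1 / (2 * lam) * (norm (z - A *v h))\<^sup>2 \<le> l1norm x + 1 / (2 * lam) * (norm z)\<^sup>2"
  proof -
    have "b - A *v xs = z - A *v h" by (simp add: assms(6) h_def matrix_vector_mult_diff_distrib)
    moreover have "b - A *v x = z" by (simp add: assms(6))
    ultimately show ?thesis using spec[OF assms(7), of x] by simp
  qed
  have nz: "(norm (z - A *v h))\<^sup>2 = (norm z)\<^sup>2 - 2 * (z \<bullet> (A *v h)) + a\<^sup>2"
    by (simp add: a_def power2_norm_eq_inner inner_diff_left inner_diff_right inner_commute)
  have zA: "z \<bullet> (A *v h) \<le> lam * a"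
    using norm_cauchy_schwarz[of z "A *v h"] assms(5) by (smt (verit) a_def mult_right_mono norm_ge_zero)
  have S1: "l1norm xs - l1norm x \<le> a - a\<^sup>2 / (2 * lam)"
  proof -
    have "l1norm xs - l1norm x \<le> 1 / (2 * lam) * ((norm z)\<^sup>2 - (norm (z - A *v h))\<^sup>2)"
      using opt by (simp add: algebra_simps)
    also have "\<dots> = (2 * (z \<bullet> (A *v h)) - a\<^sup>2) / (2 * lam)" by (simp add: nz)
    also have "\<dots> \<le> (2 * (lam * a) - a\<^sup>2) / (2 * lam)"
      using zA lam by (intro divide_right_mono) auto
    also have "\<dots> = a - a\<^sup>2 / (2 * lam)" using lam by (simp add: field_simps)
    finally show ?thesis .
  qed
  define T0 where "T0 = {i. xk$i \<noteq> 0}"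
  have cT0: "card T0 \<le> k" using assms(8) by (simp add: best_k_term_def l0_def T0_def)
  have S2: "l1norm xs - l1norm x \<ge> (\<Sum>i\<in>UNIV. \<bar>h$i\<bar>) - 2 * (\<Sum>i\<in>T0. \<bar>h$i\<bar>) - 2 * sig"
  proof -
    have pt: "\<bar>xs$i\<bar> - \<bar>x$i\<bar> \<ge> \<bar>h$i\<bar> - (if i \<in> T0 then 2 * \<bar>h$i\<bar> else 0) - 2 * \<bar>(x - xk)$i\<bar>" for i
    proof (cases "i \<in> T0")
      case True
      then show ?thesis by (simp add: h_def; smt (verit))
    next
      case False
      then have "xk$i = 0" by (simp add: T0_def)
      then show ?thesis using False by (simp add: h_def; smt (verit))
    qed
    have "(\<Sum>i\<in>UNIV. \<bar>h$i\<bar> - (if i \<in> T0 then 2 * \<bar>h$i\<bar> else 0) - 2 * \<bar>(x - xk)$i\<bar>) \<le> (\<Sum>i\<in>UNIV. \<bar>xs$i\<bar> - \<bar>x$i\<bar>)"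
      by (intro sum_mono pt)
    moreover have "(\<Sum>i\<in>UNIV. (if i \<in> T0 then 2 * \<bar>h$i\<bar> else 0)) = 2 * (\<Sum>i\<in>T0. \<bar>h$i\<bar>)"
      by (simp add: sum.If_cases sum_distrib_left)
    ultimately show ?thesis
      by (simp add: l1norm_def sig_def sum_subtractf sum_distrib_left)
  qed
  define f where "f = (\<lambda>T. \<Sum>i\<in>T. \<bar>h$i\<bar>)"
  define SS where "SS = {T :: 'n set. card T \<le> k}"
  have finSS: "finite SS" by simp
  have SSne: "{} \<in> SS" by (simp add: SS_def)
  obtain T where TS: "T \<in> SS" and Tmax: "\<And>T'. T' \<in> SS \<Longrightarrow> f T' \<le> f T"
  proof -
    have "Max (f ` SS) \<in> f ` SS" using finSS SSne by (intro Max_in) auto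
    then obtain T where "T \<in> SS" "f T = Max (f ` SS)" by auto
    moreover have "f T' \<le> Max (f ` SS)" if "T' \<in> SS" for T' using finSS that by (intro Max_ge) auto
    ultimately show ?thesis using that by metis
  qed
  have cT: "card T \<le> k" using TS by (simp add: SS_def)
  define ST where "ST = f T"
  define v where "v = (\<chi> i. if i \<in> T then h$i else 0)"
  define w where "w = (\<chi> i. if i \<in> T then 0 else h$i)"
  define H where "H = (\<Sum>i\<in>UNIV. \<bar>w$i\<bar>)"
  define L where "L = norm v"
  have hvw: "h = v + w" by (simp add: vec_eq_iff v_def w_def)
  have vsupp: "\<And>i. i \<notin> T \<Longrightarrow> v$i = 0" by (simp add: v_def)
  have wsupp: "\<And>i. i \<in> T \<Longrightarrow> w$i = 0" by (simp add: w_def)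
  have STv: "(\<Sum>i\<in>UNIV. \<bar>v$i\<bar>) = ST"
  proof -
    have "(\<Sum>i\<in>UNIV. \<bar>v$i\<bar>) = (\<Sum>i\<in>T. \<bar>v$i\<bar>)" by (rule sum_UNIV_supp) (simp add: vsupp)
    also have "\<dots> = ST" by (simp add: ST_def f_def v_def)
    finally show ?thesis .
  qed
  have ST0: "ST \<ge> 0" by (simp add: ST_def f_def sum_nonneg)
  have H0: "H \<ge> 0" by (simp add: H_def sum_nonneg)
  have L0: "L \<ge> 0" by (simp add: L_def)
  have a0: "a \<ge> 0" by (simp add: a_def)
  have sig0: "sig \<ge> 0" by (simp add: sig_def l1norm_def sum_nonneg)
  have habs: "(\<Sum>i\<in>UNIV. \<bar>h$i\<bar>) = ST + H"
  proof -
    have "(\<Sum>i\<in>UNIV. \<bar>h$i\<bar>) = (\<Sum>i\<in>UNIV. \<bar>v$i\<bar> + \<bar>w$i\<bar>)"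
      by (rule sum.cong) (auto simp: v_def w_def)
    then show ?thesis by (simp add: sum.distrib STv H_def)
  qed
  have fT0: "(\<Sum>i\<in>T0. \<bar>h$i\<bar>) \<le> ST"
    using Tmax[of T0] cT0 by (simp add: SS_def f_def ST_def)
  have cone: "H \<le> ST + 2 * sig + a - a\<^sup>2 / (2 * lam)"
    using S1 S2 habs fT0 by linarith
  have L2: "L\<^sup>2 = (\<Sum>i\<in>UNIV. (v$i)\<^sup>2)" by (simp add: L_def norm_sq_vec)
  have STL: "ST \<le> s * L"
  proof -
    have "ST\<^sup>2 \<le> real (card T) * L\<^sup>2" using l1_l2_card[of T v] vsupp STv L2 by simp
    also have "\<dots> \<le> real k * L\<^sup>2" using cT by (intro mult_right_mono) auto
    also have "\<dots> = (s * L)\<^sup>2" by (simp add: rk power_mult_distrib)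
    finally show ?thesis by (rule power2_le_imp_le) (use s0 L0 in auto)
  qed
  have gram: "\<bar>(A *v v) \<bullet> (A *v v) - L\<^sup>2\<bar> \<le> mu * (real k - 1) * L\<^sup>2"
    using gram_bound[OF assms(2) vsupp cT] by (simp add: L2 mu_def)
  have cross: "\<bar>(A *v v) \<bullet> (A *v w)\<bar> \<le> mu * ST * H"
    using cross_bound[of T v w A] vsupp wsupp by (simp add: STv H_def mu_def)
  have Lb: "L \<le> p * a + q * H"
  proof (cases "L = 0")
    case True then show ?thesis using p0 q0 a0 H0 by simp
  next
    case False
    then have Lp: "L > 0" using L0 by simp
    have nAv: "norm (A *v v) \<le> sqrt (1 + (real k - 1) * mu) * L"
    proof -
      have "(norm (A *v v))\<^sup>2 \<le> (1 + (real k - 1) * mu) * L\<^sup>2"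
        using gram by (simp add: power2_norm_eq_inner algebra_simps)
      also have "\<dots> = (sqrt (1 + (real k - 1) * mu) * L)\<^sup>2"
        using mu0 k2 by (simp add: power_mult_distrib)
      finally show ?thesis by (rule power2_le_imp_le) (use L0 mu0 k2 in auto)
    qed
    have "(A *v v) \<bullet> (A *v h) = (A *v v) \<bullet> (A *v v) + (A *v v) \<bullet> (A *v w)"
      by (simp add: hvw matrix_vector_right_distrib inner_add_right)
    then have "den * L\<^sup>2 \<le> (A *v v) \<bullet> (A *v h) + mu * ST * H"
      using gram cross by (simp add: den_def algebra_simps; smt (verit))
    also have "\<dots> \<le> norm (A *v v) * a + mu * ST * H"
      using norm_cauchy_schwarz[of "A *v v" "A *v h"] by (simp add: a_def)
    also have "\<dots> \<le> sqrt (1 + (real k - 1) * mu) * L * a + mu * (s * L) * H"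
      using nAv a0 STL mu0 H0 by (intro add_mono mult_right_mono mult_left_mono) auto
    finally have "den * L * L \<le> (sqrt (1 + (real k - 1) * mu) * a + mu * s * H) * L"
      by (simp add: power2_eq_square algebra_simps)
    then have "den * L \<le> sqrt (1 + (real k - 1) * mu) * a + mu * s * H"
      using Lp by simp
    then show ?thesis using denp by (simp add: pdef qdef field_simps)
  qed
  have wb: "\<bar>w$i\<bar> \<le> ST / real k" for i
  proof (cases "i \<in> T")
    case True then show ?thesis using ST0 by (simp add: wsupp)
  next
    case False
    then have wi: "w$i = h$i" by (simp add: w_def)
    show ?thesis
    proof (cases "card T < k")
      case True
      then have "insert i T \<in> SS" using False by (simp add: SS_def)
      then have "f (insert i T) \<le> ST" using Tmax by (simp add: ST_def)
      then have "\<bar>h$i\<bar> \<le> 0" using False by (simp add: f_def ST_def)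
      then show ?thesis using wi ST0 by simp
    next
      case False2: False
      then have cTk: "card T = k" using cT by simp
      have "\<bar>h$i\<bar> \<le> \<bar>h$j\<bar>" if j: "j \<in> T" for j
      proof -
        have fin: "finite T" by simp
        have "card (insert i (T - {j})) = k" using False j cTk fin assms(1) by (simp add: card_Diff_singleton)
        then have "insert i (T - {j}) \<in> SS" by (simp add: SS_def)
        then have "f (insert i (T - {j})) \<le> ST" using Tmax by (simp add: ST_def)
        moreover have "f (insert i (T - {j})) = \<bar>h$i\<bar> + (ST - \<bar>h$j\<bar>)"
          using False j fin by (simp add: f_def ST_def sum_diff1)
        ultimately show ?thesis by simp
      qed
      then have "(\<Sum>j\<in>T. \<bar>h$i\<bar>) \<le> ST" unfolding ST_def f_def by (intro sum_mono) auto
      then have "real k * \<bar>h$i\<bar> \<le> ST" using cTk by simp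
      then show ?thesis using wi k2 by (simp add: field_simps)
    qed
  qed
  have wsq: "(\<Sum>i\<in>UNIV. (w$i)\<^sup>2) \<le> L * H / s"
  proof -
    have "(\<Sum>i\<in>UNIV. (w$i)\<^sup>2) \<le> (\<Sum>i\<in>UNIV. \<bar>w$i\<bar> * (ST / real k))"
    proof (rule sum_mono)
      fix i
      have "(w$i)\<^sup>2 = \<bar>w$i\<bar> * \<bar>w$i\<bar>" by (simp add: power2_eq_square)
      also have "\<dots> \<le> \<bar>w$i\<bar> * (ST / real k)" by (rule mult_left_mono[OF wb]) simp
      finally show "(w$i)\<^sup>2 \<le> \<bar>w$i\<bar> * (ST / real k)" .
    qed
    also have "\<dots> = H * ST / real k" by (simp add: H_def sum_distrib_right sum_divide_distrib)
    also have "\<dots> \<le> H * (s * L) / real k" using STL H0 k2 by (intro divide_right_mono mult_left_mono) auto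
    also have "\<dots> = L * H / s" using s0 by (simp add: rk power2_eq_square field_simps)
    finally show ?thesis .
  qed
  have nh: "norm h \<le> L + H / (2 * s)"
  proof -
    have "(norm h)\<^sup>2 = (\<Sum>i\<in>UNIV. (v$i)\<^sup>2) + (\<Sum>i\<in>UNIV. (w$i)\<^sup>2)"
      unfolding norm_sq_vec sum.distrib[symmetric] by (rule sum.cong) (auto simp: v_def w_def)
    also have "\<dots> \<le> L\<^sup>2 + L * H / s" using wsq L2 by simp
    also have "\<dots> \<le> (L + H / (2 * s))\<^sup>2"
      using s0 H0 by (simp add: power2_eq_square field_simps)
    finally show ?thesis by (rule power2_le_imp_le) (use L0 H0 s0 in auto)
  qed
  note fa = final_alg[OF s0 p0 q0 Dpos lam sig0 a0 H0 L0 cone STL Lb nh]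
  show ?thesis
    unfolding C1_def C2_def C3_def C4_def fk_def gk_def mu_def[symmetric] p_def[symmetric] q_def[symmetric]
      s_def[symmetric] rk
    using fa s0 by (simp add: a_def h_def sig_def)
qed

end
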